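(* Let $G$ be a median graph with $n\ge 3$ vertices in $\mathcal{U}_3$, and let $v_0$ be its unique vertex lying in every majority halfspace. Let $L$ be a nonempty pairwise orthogonal family of $\Theta$-classes each of which contains an edge incident to $v_0$, and let $V_L=\{v\in V(G)\setminus\{v_0\}: L_{v_0,v}=L\}$. Then $V_L$ is nonempty and gated.
   Context: Graphs are finite, simple, connected, undirected; $d$ is shortest-path distance; $I(u,v)=\{x:d(u,x)+d(x,v)=d(u,v)\}$; a graph is median if every triple $x,y,z$ has $|I(x,y)\cap I(y,z)\cap I(z,x)|=1$. A vertex set $H$ is gated if each vertex $v$ has a vertex $g_H(v)\in H$ with $g_H(v)\in I(v,x)$ for all $x\in H$. $\Theta$-classes: classes of the reflexive–transitive closure of the relation on edges "opposite edges of a 4-cycle"; deleting a $\Theta$-class $E_i$ of a median graph leaves two components with vertex sets (halfspaces) $H_i',H_i''$. $\mathcal{U}_3$ is the family of median graphs with $n$ vertices in which every $\Theta$-class satisfies $\min\{|H_i'|,|H_i''|\}<n/3$; the larger halfspace is the majority halfspace. Two $\Theta$-classes $E_i,E_j$ are orthogonal if there is a 4-cycle $uvyx$ with $uv,xy\in E_i$ and $ux,vy\in E_j$; a pairwise orthogonal family (POF) is a set of pairwise orthogonal $\Theta$-classes. For $u\ne v$, the ladder set $L_{u,v}$ is the set of $\Theta$-classes $E_i$ such that $u,v$ lie in different halfspaces of $E_i$ and $u$ is an endpoint of an edge of $E_i$. *)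

theory Defs
  imports Main
begin

definition simple_graph :: "'a set \<Rightarrow> ('a \<Rightarrow> 'a \<Rightarrow> bool) \<Rightarrow> bool" where
  "simple_graph V E \<longleftrightarrow> finite V \<and> V \<noteq> {} \<and>
     (\<forall>u v. E u v \<longrightarrow> u \<in> V \<and> v \<in> V) \<and>
     (\<forall>u v. E u v \<longrightarrow> E v u) \<and> (\<forall>u. \<not> E u u)"

definition graph_connected :: "'a set \<Rightarrow> ('a \<Rightarrow> 'a \<Rightarrow> bool) \<Rightarrow> bool" where
  "graph_connected V E \<longleftrightarrow> (\<forall>u\<in>V. \<forall>v\<in>V. E\<^sup>*\<^sup>* u v)"

fun is_walk :: "('a \<Rightarrow> 'a \<Rightarrow> bool) \<Rightarrow> 'a list \<Rightarrow> bool" where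
  "is_walk E [] = False"
| "is_walk E [x] = True"
| "is_walk E (x # y # xs) = (E x y \<and> is_walk E (y # xs))"

definition dist :: "('a \<Rightarrow> 'a \<Rightarrow> bool) \<Rightarrow> 'a \<Rightarrow> 'a \<Rightarrow> nat" where
  "dist E u v = (LEAST n. \<exists>xs. is_walk E xs \<and> hd xs = u \<and> last xs = v \<and> length xs = Suc n)"

definition interval :: "'a set \<Rightarrow> ('a \<Rightarrow> 'a \<Rightarrow> bool) \<Rightarrow> 'a \<Rightarrow> 'a \<Rightarrow> 'a set" where
  "interval V E u v = {x \<in> V. dist E u x + dist E x v = dist E u v}"

definition median_graph :: "'a set \<Rightarrow> ('a \<Rightarrow> 'a \<Rightarrow> bool) \<Rightarrow> bool" where
  "median_graph V E \<longleftrightarrow> simple_graph V E \<and> graph_connected V E \<and>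
     (\<forall>x\<in>V. \<forall>y\<in>V. \<forall>z\<in>V.
        card (interval V E x y \<inter> interval V E y z \<inter> interval V E z x) = 1)"

definition gated :: "'a set \<Rightarrow> ('a \<Rightarrow> 'a \<Rightarrow> bool) \<Rightarrow> 'a set \<Rightarrow> bool" where
  "gated V E H \<longleftrightarrow> (\<forall>v\<in>V. \<exists>g\<in>H. \<forall>x\<in>H. g \<in> interval V E v x)"

definition edges :: "('a \<Rightarrow> 'a \<Rightarrow> bool) \<Rightarrow> 'a set set" where
  "edges E = {{u, v} | u v. E u v}"

definition four_cycle :: "('a \<Rightarrow> 'a \<Rightarrow> bool) \<Rightarrow> 'a \<Rightarrow> 'a \<Rightarrow> 'a \<Rightarrow> 'a \<Rightarrow> bool" where
  "four_cycle E u v y x \<longleftrightarrow> E u v \<and> E v y \<and> E y x \<and> E x u \<and> u \<noteq> y \<and> v \<noteq> x"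

definition opp_rel :: "('a \<Rightarrow> 'a \<Rightarrow> bool) \<Rightarrow> ('a set \<times> 'a set) set" where
  "opp_rel E = {({u, v}, {x, y}) | u v x y. four_cycle E u v y x}"

definition theta :: "('a \<Rightarrow> 'a \<Rightarrow> bool) \<Rightarrow> ('a set \<times> 'a set) set" where
  "theta E = {(e, f). e \<in> edges E \<and> f \<in> edges E \<and> (e, f) \<in> (opp_rel E)\<^sup>*}"

definition theta_classes :: "('a \<Rightarrow> 'a \<Rightarrow> bool) \<Rightarrow> 'a set set set" where
  "theta_classes E = edges E // theta E"

definition del_class :: "('a \<Rightarrow> 'a \<Rightarrow> bool) \<Rightarrow> 'a set set \<Rightarrow> 'a \<Rightarrow> 'a \<Rightarrow> bool" where
  "del_class E F u v \<longleftrightarrow> E u v \<and> {u, v} \<notin> F"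

definition halfspaces :: "'a set \<Rightarrow> ('a \<Rightarrow> 'a \<Rightarrow> bool) \<Rightarrow> 'a set set \<Rightarrow> 'a set set" where
  "halfspaces V E F = {{v \<in> V. (del_class E F)\<^sup>*\<^sup>* u v} | u. u \<in> V}"

definition in_U3 :: "'a set \<Rightarrow> ('a \<Rightarrow> 'a \<Rightarrow> bool) \<Rightarrow> bool" where
  "in_U3 V E \<longleftrightarrow> median_graph V E \<and>
     (\<forall>F\<in>theta_classes E. \<exists>H\<in>halfspaces V E F. 3 * card H < card V)"

definition majority_halfspace :: "'a set \<Rightarrow> ('a \<Rightarrow> 'a \<Rightarrow> bool) \<Rightarrow> 'a set set \<Rightarrow> 'a set \<Rightarrow> bool" where
  "majority_halfspace V E F H \<longleftrightarrow> H \<in> halfspaces V E F \<and>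
     (\<forall>H'\<in>halfspaces V E F. H' \<noteq> H \<longrightarrow> card H' < card H)"

definition orthogonal :: "('a \<Rightarrow> 'a \<Rightarrow> bool) \<Rightarrow> 'a set set \<Rightarrow> 'a set set \<Rightarrow> bool" where
  "orthogonal E F1 F2 \<longleftrightarrow> (\<exists>u v y x. four_cycle E u v y x \<and>
     {u, v} \<in> F1 \<and> {x, y} \<in> F1 \<and> {u, x} \<in> F2 \<and> {v, y} \<in> F2)"

definition POF :: "('a \<Rightarrow> 'a \<Rightarrow> bool) \<Rightarrow> 'a set set set \<Rightarrow> bool" where
  "POF E L \<longleftrightarrow> L \<subseteq> theta_classes E \<and>
     (\<forall>F1\<in>L. \<forall>F2\<in>L. F1 \<noteq> F2 \<longrightarrow> orthogonal E F1 F2)"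

definition separates :: "'a set \<Rightarrow> ('a \<Rightarrow> 'a \<Rightarrow> bool) \<Rightarrow> 'a set set \<Rightarrow> 'a \<Rightarrow> 'a \<Rightarrow> bool" where
  "separates V E F u v \<longleftrightarrow> (\<exists>H1\<in>halfspaces V E F. \<exists>H2\<in>halfspaces V E F.
      H1 \<noteq> H2 \<and> u \<in> H1 \<and> v \<in> H2)"

definition ladder_set :: "'a set \<Rightarrow> ('a \<Rightarrow> 'a \<Rightarrow> bool) \<Rightarrow> 'a \<Rightarrow> 'a \<Rightarrow> 'a set set set" where
  "ladder_set V E u v = {F \<in> theta_classes E. separates V E F u v \<and> (\<exists>e\<in>F. u \<in> e)}"

end

theory Submission imports Defs begin

lemma walk_relpow:
  "(\<exists>xs. is_walk E xs \<and> hd xs = u \<and> last xs = v \<and> length xs = Suc n) \<longleftrightarrow> (E ^^ n) u v"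
proof (induction n arbitrary: u)
  case 0
  show ?case
  proof
    assume "\<exists>xs. is_walk E xs \<and> hd xs = u \<and> last xs = v \<and> length xs = Suc 0"
    then obtain xs where "hd xs = u" "last xs = v" "length xs = Suc 0" by blast
    then show "(E ^^ 0) u v" by (cases xs) auto
  next
    assume "(E ^^ 0) u v" then show "\<exists>xs. is_walk E xs \<and> hd xs = u \<and> last xs = v \<and> length xs = Suc 0"
      by (intro exI[of _ "[u]"]) auto
  qed
next
  case (Suc n)
  show ?case
  proof
    assume "\<exists>xs. is_walk E xs \<and> hd xs = u \<and> last xs = v \<and> length xs = Suc (Suc n)"
    then obtain xs where xs: "is_walk E xs" "hd xs = u" "last xs = v" "length xs = Suc (Suc n)" by blast
    then obtain y ys where "xs = u # y # ys" by (cases xs; cases "tl xs") auto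
    with xs have "E u y" "is_walk E (y # ys)" "last (y#ys) = v" "length (y#ys) = Suc n" by auto
    then have "(E ^^ n) y v" using Suc.IH[of y] by (metis list.sel(1))
    then show "(E ^^ Suc n) u v" using \<open>E u y\<close> by (metis relpowp_Suc_I2)
  next
    assume "(E ^^ Suc n) u v"
    then obtain y where "E u y" "(E ^^ n) y v" by (rule relpowp_Suc_E2)
    then obtain xs where xs: "is_walk E xs" "hd xs = y" "last xs = v" "length xs = Suc n"
      using Suc.IH[of y] by blast
    then obtain zs where "xs = y # zs" by (cases xs) auto
    with xs \<open>E u y\<close> show "\<exists>xs. is_walk E xs \<and> hd xs = u \<and> last xs = v \<and> length xs = Suc (Suc n)"
      by (intro exI[of _ "u # xs"]) auto
  qed
qed

lemma dist_eq: "dist E u v = (LEAST n. (E ^^ n) u v)"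
  unfolding dist_def walk_relpow ..

lemma relpow_sym:
  assumes "\<And>a b. E a b \<Longrightarrow> E b a"
  shows "(E ^^ n) u v \<Longrightarrow> (E ^^ n) v u"
proof (induction n arbitrary: u v)
  case 0 then show ?case by auto
next
  case (Suc n)
  from Suc.prems obtain y where "(E ^^ n) u y" "E y v" by (rule relpowp_Suc_E)
  then show ?case using Suc.IH assms by (meson relpowp_Suc_I2)
qed

locale medg =
  fixes V :: "'a set" and E :: "'a \<Rightarrow> 'a \<Rightarrow> bool"
  assumes med: "median_graph V E"
begin

abbreviation d where "d \<equiv> dist E"
abbreviation I where "I \<equiv> interval V E"

lemma sg: "simple_graph V E" using med unfolding median_graph_def by auto
lemma E_V: "E u v \<Longrightarrow> u \<in> V \<and> v \<in> V" using sg unfolding simple_graph_def by auto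
lemma E_sym: "E u v \<Longrightarrow> E v u" using sg unfolding simple_graph_def by auto
lemma E_irr: "\<not> E u u" using sg unfolding simple_graph_def by auto
lemma fin: "finite V" using sg unfolding simple_graph_def by auto
lemma conn: "u \<in> V \<Longrightarrow> v \<in> V \<Longrightarrow> (E ^^ (d u v)) u v"
proof -
  assume "u \<in> V" "v \<in> V"
  then have "E\<^sup>*\<^sup>* u v" using med unfolding median_graph_def graph_connected_def by auto
  then obtain n where "(E ^^ n) u v" using rtranclp_imp_relpowp by metis
  then show ?thesis unfolding dist_eq by (rule LeastI)
qed
lemma d_le: "(E ^^ n) u v \<Longrightarrow> d u v \<le> n" unfolding dist_eq by (rule Least_le)
lemma d_refl[simp]: "d u u = 0" using d_le[of 0 u u] by simp
lemma d_zero: "u \<in> V \<Longrightarrow> v \<in> V \<Longrightarrow> d u v = 0 \<Longrightarrow> u = v"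
  using conn[of u v] by simp
lemma d_sym: "d u v = d v u"
  unfolding dist_eq using relpow_sym[of E] E_sym by metis
lemma d_tri: "u \<in> V \<Longrightarrow> v \<in> V \<Longrightarrow> w \<in> V \<Longrightarrow> d u w \<le> d u v + d v w"
  using conn[of u v] conn[of v w] d_le relpowp_trans by metis
lemma d_edge: "E u v \<Longrightarrow> d u v = 1"
proof -
  assume e: "E u v"
  then have "d u v \<le> 1" using d_le[of 1 u v] by (simp add: OO_def)
  moreover have "u \<noteq> v" using e E_irr by auto
  then have "d u v \<noteq> 0" using d_zero E_V e by blast
  ultimately show ?thesis by simp
qed
lemma d_one: "u \<in> V \<Longrightarrow> v \<in> V \<Longrightarrow> d u v = 1 \<Longrightarrow> E u v"
  using conn[of u v] by (simp add: OO_def)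
lemma d_step: "u \<in> V \<Longrightarrow> v \<in> V \<Longrightarrow> u \<noteq> v \<Longrightarrow> \<exists>w. E u w \<and> d w v + 1 = d u v"
proof -
  assume uv: "u \<in> V" "v \<in> V" "u \<noteq> v"
  then have "d u v \<noteq> 0" using d_zero by blast
  then obtain k where k: "d u v = Suc k" by (cases "d u v") auto
  have "(E ^^ Suc k) u v" using conn[OF uv(1,2)] k by simp
  then obtain w where w: "E u w" "(E ^^ k) w v" by (rule relpowp_Suc_E2)
  have "d w v \<le> k" using d_le[OF w(2)] .
  moreover have "d u v \<le> d u w + d w v" using d_tri uv E_V w(1) by blast
  ultimately show ?thesis using w(1) d_edge[OF w(1)] k by (intro exI[of _ w]) auto
qed
lemma d_nb: "E u w \<Longrightarrow> x \<in> V \<Longrightarrow> d x w \<le> d x u + 1"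
proof -
  assume e: "E u w" and x: "x \<in> V"
  have "d x w \<le> d x u + d u w" using d_tri[of x u w] E_V[OF e] x by blast
  then show ?thesis using d_edge[OF e] by simp
qed

lemma I_def': "z \<in> I x y \<longleftrightarrow> z \<in> V \<and> d x z + d z y = d x y"
  unfolding interval_def by auto

lemma med_ex: "x \<in> V \<Longrightarrow> y \<in> V \<Longrightarrow> z \<in> V \<Longrightarrow> \<exists>m. m \<in> I x y \<and> m \<in> I y z \<and> m \<in> I z x"
proof -
  assume a: "x \<in> V" "y \<in> V" "z \<in> V"
  have "card (I x y \<inter> I y z \<inter> I z x) = Suc 0" using med a unfolding median_graph_def by auto
  then obtain m where "I x y \<inter> I y z \<inter> I z x = {m}" unfolding card_1_singleton_iff by blast
  then show ?thesis by blast
qed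
lemma med_uniq: "x \<in> V \<Longrightarrow> y \<in> V \<Longrightarrow> z \<in> V \<Longrightarrow> a \<in> I x y \<Longrightarrow> a \<in> I y z \<Longrightarrow> a \<in> I z x
  \<Longrightarrow> b \<in> I x y \<Longrightarrow> b \<in> I y z \<Longrightarrow> b \<in> I z x \<Longrightarrow> a = b"
proof -
  assume a: "x \<in> V" "y \<in> V" "z \<in> V" "a \<in> I x y" "a \<in> I y z" "a \<in> I z x"
    "b \<in> I x y" "b \<in> I y z" "b \<in> I z x"
  have "card (I x y \<inter> I y z \<inter> I z x) = Suc 0" using med a unfolding median_graph_def by auto
  then obtain m where m: "I x y \<inter> I y z \<inter> I z x = {m}" unfolding card_1_singleton_iff by blast
  have "a \<in> I x y \<inter> I y z \<inter> I z x" "b \<in> I x y \<inter> I y z \<inter> I z x" using a by auto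
  then show ?thesis unfolding m by auto
qed

lemma bip: "E u v \<Longrightarrow> x \<in> V \<Longrightarrow> d x u \<noteq> d x v"
proof
  assume e: "E u v" and x: "x \<in> V" and eq: "d x u = d x v"
  have uv: "u \<in> V" "v \<in> V" using E_V e by auto
  obtain m where m: "m \<in> I x u" "m \<in> I u v" "m \<in> I v x" using med_ex[OF x uv] by blast
  have mV: "m \<in> V" using m I_def' by auto
  from m(2) have "d u m + d m v = 1" using d_edge[OF e] I_def' by auto
  then have "d u m = 0 \<or> d m v = 0" by auto
  then show False
  proof
    assume "d u m = 0" then have "m = u" using d_zero uv mV by metis
    then have "d v u + d u x = d v x" using m(3) I_def' by auto
    then show False using eq d_edge[OF e] d_sym[of v u] d_sym[of u x] d_sym[of v x] by simp
  next
    assume "d m v = 0" then have "m = v" using d_zero uv mV by metis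
    then have "d x v + d v u = d x u" using m(1) I_def' by auto
    then show False using eq d_edge[OF e] d_sym[of v u] by simp
  qed
qed

lemma bip2: "E u v \<Longrightarrow> x \<in> V \<Longrightarrow> d x v = d x u + 1 \<or> d x u = d x v + 1"
proof -
  assume e: "E u v" and x: "x \<in> V"
  show ?thesis using bip[OF e x] d_nb[OF e x] d_nb[OF E_sym[OF e] x] by linarith
qed


definition W where "W u v = {x \<in> V. d x u < d x v}"

lemma W_split: "E u v \<Longrightarrow> x \<in> V \<Longrightarrow> x \<in> W u v \<or> x \<in> W v u"
  using bip unfolding W_def by (metis (mono_tags, lifting) mem_Collect_eq nat_neq_iff)
lemma W_disj: "x \<in> W u v \<Longrightarrow> x \<notin> W v u"
  unfolding W_def by auto
lemma W_V: "W u v \<subseteq> V" unfolding W_def by auto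
lemma W_self: "E u v \<Longrightarrow> u \<in> W u v"
  unfolding W_def using d_edge E_V by auto
lemma W_compl: "E u v \<Longrightarrow> W v u = V - W u v"
  using W_split W_disj W_V by blast

lemma d_two: "E a c \<Longrightarrow> E c b \<Longrightarrow> a \<noteq> b \<Longrightarrow> \<not> E a b \<Longrightarrow> d a b = 2"
proof -
  assume e: "E a c" "E c b" "a \<noteq> b" "\<not> E a b"
  have V: "a \<in> V" "b \<in> V" "c \<in> V" using E_V e by auto
  have "d a b \<le> d a c + d c b" using d_tri V by blast
  then have "d a b \<le> 2" using d_edge e by simp
  moreover have "d a b \<noteq> 0" using d_zero V e by blast
  moreover have "d a b \<noteq> 1" using d_one V e by blast
  ultimately show ?thesis by simp
qed

lemma square:
  assumes c: "four_cycle E u v y x"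
  shows "W u v \<subseteq> W x y"
proof
  fix z assume z: "z \<in> W u v"
  have e: "E u v" "E v y" "E y x" "E x u" "u \<noteq> y" "v \<noteq> x" using c unfolding four_cycle_def by auto
  have V: "u \<in> V" "v \<in> V" "x \<in> V" "y \<in> V" using E_V e by auto
  have zV: "z \<in> V" using z W_V by auto
  define k where "k = d z u"
  have zv: "d z v = k + 1" using z bip2[OF e(1) zV] unfolding W_def k_def by auto
  show "z \<in> W x y"
  proof (rule ccontr)
    assume "z \<notin> W x y"
    then have zxy: "d z x = d z y + 1" using bip2[OF e(3) zV] zV unfolding W_def by auto
    have "d z x = k + 1 \<or> k = d z x + 1" using bip2[OF e(4) zV] k_def by auto
    moreover have "d z y = k + 2 \<or> k + 1 = d z y + 1" using bip2[OF e(2) zV] zv by auto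
    ultimately have zx: "d z x = k + 1" and zy: "d z y = k" using zxy by auto
    have nvx: "\<not> E v x" using bip[OF E_sym[OF e(4)] V(2)] d_edge[OF e(1)] d_edge d_sym by metis
    have dvx: "d v x = 2" using d_two[OF E_sym[OF e(1)] E_sym[OF e(4)] e(6) nvx] .
    have "u \<in> I z v" "u \<in> I v x" "u \<in> I x z"
      using V zV zv dvx d_edge[OF e(1)] d_edge[OF E_sym[OF e(4)]] d_edge[OF e(4)] k_def zx unfolding I_def' by (auto simp: d_sym)
    moreover have "y \<in> I z v" "y \<in> I v x" "y \<in> I x z"
      using V zV zv dvx d_edge[OF e(2)] d_edge[OF e(3)] d_edge[OF E_sym[OF e(3)]] zy zx unfolding I_def' by (auto simp: d_sym)
    ultimately have "u = y" using med_uniq[OF zV V(2) V(3)] by blast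
    then show False using e by simp
  qed
qed

lemma square_eq:
  assumes c: "four_cycle E u v y x"
  shows "W u v = W x y"
proof -
  have "four_cycle E x y v u" using c unfolding four_cycle_def by (auto dest: E_sym)
  then show ?thesis using square c by blast
qed

lemma quad:
  assumes z: "z \<in> V" and e: "E a c" "E b c" "a \<noteq> b"
    and dist: "d z a = k" "d z b = k" "d z c = k + 1"
  shows "\<exists>w. E a w \<and> E b w \<and> d z w + 1 = k"
proof -
  have V: "a \<in> V" "b \<in> V" "c \<in> V" using E_V e by auto
  have nab: "\<not> E a b" using bip[OF _ z] dist by metis
  have dab: "d a b = 2" using d_two[OF e(1) E_sym[OF e(2)] e(3) nab] .
  obtain m where m: "m \<in> I z a" "m \<in> I a b" "m \<in> I b z" using med_ex[OF z V(1,2)] by blast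
  have mV: "m \<in> V" using m I_def' by auto
  have s: "d a m + d m b = 2" using m(2) dab I_def' by auto
  have "d a m \<noteq> 0"
  proof
    assume "d a m = 0" then have "m = a" using d_zero V mV by metis
    then show False using m(3) dab dist I_def' d_sym by (metis add_cancel_right_right add.commute zero_neq_numeral)
  qed
  moreover have "d m b \<noteq> 0"
  proof
    assume "d m b = 0" then have "m = b" using d_zero V mV by metis
    then show False using m(1) dab dist I_def' d_sym by (metis add_cancel_right_right zero_neq_numeral)
  qed
  ultimately have "d a m = 1" "d m b = 1" using s by auto
  then have "E a m" "E b m" using d_one V mV d_sym by metis+
  moreover have "d z m + 1 = k" using m(1) \<open>d a m = 1\<close> dist I_def' d_sym by metis
  ultimately show ?thesis by blast
qed

lemma cross_aux:
  assumes uv: "E u v"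
  shows "\<forall>x z. d x u = n \<longrightarrow> E x z \<longrightarrow> x \<in> W u v \<longrightarrow> z \<in> W v u \<longrightarrow>
     W x z = W u v \<and> ({x, z}, {u, v}) \<in> (opp_rel E)\<^sup>*"
proof (induction n)
  case 0
  show ?case
  proof (intro allI impI)
    fix x z assume a: "d x u = 0" "E x z" "x \<in> W u v" "z \<in> W v u"
    have V: "x \<in> V" "z \<in> V" "u \<in> V" "v \<in> V" using E_V a(2) uv by auto
    have "x = u" using d_zero a V by blast
    have "d z u = d z v + 1" using a(4) bip2[OF uv V(2)] unfolding W_def by auto
    moreover have "d z u \<le> d x u + 1" using d_nb[OF a(2) V(3)] d_sym by metis
    ultimately have "d z v = 0" using a by simp
    then have "z = v" using d_zero V by blast
    then show "W x z = W u v \<and> ({x, z}, {u, v}) \<in> (opp_rel E)\<^sup>*" using \<open>x = u\<close> by simp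
  qed
next
  case (Suc n)
  show ?case
  proof (intro allI impI)
    fix x z assume a: "d x u = Suc n" "E x z" "x \<in> W u v" "z \<in> W v u"
    have V: "x \<in> V" "z \<in> V" "u \<in> V" "v \<in> V" using E_V a(2) uv by auto
    have xv: "d x v = Suc n + 1" using a(1,3) bip2[OF uv V(1)] unfolding W_def by auto
    have zu: "d z u = d z v + 1" using a(4) bip2[OF uv V(2)] unfolding W_def by auto
    have "d z v = d x v + 1 \<or> d x v = d z v + 1" using bip2[OF a(2)] V d_sym by metis
    moreover have "d z u = d x u + 1 \<or> d x u = d z u + 1" using bip2[OF a(2)] V d_sym by metis
    ultimately have zv: "d z v = Suc n" and zu': "d z u = Suc n + 1" using xv zu a(1) by auto
    have "x \<noteq> u" using a(1) by auto
    then obtain x' where x': "E x x'" "d x' u + 1 = d x u" using d_step V by blast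
    have x'V: "x' \<in> V" using E_V x' by auto
    have x'u: "d x' u = n" using x' a(1) by simp
    have "d x' v \<le> d x' u + d u v" using d_tri x'V V by blast
    then have "d x' v \<le> Suc n" using x'u d_edge[OF uv] by simp
    moreover have "d x' v = d x v + 1 \<or> d x v = d x' v + 1" using bip2[OF x'(1)] V d_sym by metis
    ultimately have x'v: "d x' v = Suc n" using xv by auto
    have "x' \<noteq> z" using x'u zu' by auto
    then obtain w where w: "E x' w" "E z w" "d v w + 1 = Suc n"
      using quad[OF V(4) E_sym[OF x'(1)] E_sym[OF a(2)], of "Suc n"] x'v zv xv d_sym by metis
    have wV: "w \<in> V" using E_V w by auto
    have wv: "d w v = n" using w(3) d_sym by simp
    have "d w u \<le> d w x' + d x' u" using d_tri wV x'V V by blast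
    then have "d w u \<le> Suc n" using x'u d_edge[OF E_sym[OF w(1)]] by simp
    moreover have "d w u = d z u + 1 \<or> d z u = d w u + 1" using bip2[OF w(2)] V d_sym by metis
    ultimately have wu: "d w u = Suc n" using zu' by auto
    have x'W: "x' \<in> W u v" using x'u x'v x'V unfolding W_def by auto
    have wW: "w \<in> W v u" using wu wv wV unfolding W_def by auto
    have IH: "W x' w = W u v \<and> ({x', w}, {u, v}) \<in> (opp_rel E)\<^sup>*"
      using Suc.IH x'u w(1) x'W wW by blast
    have xw: "x \<noteq> w" using xv wv by auto
    have c: "four_cycle E x z w x'" unfolding four_cycle_def
      using a(2) w E_sym x' xw \<open>x' \<noteq> z\<close> by blast
    have "W x z = W x' w" using square_eq[OF c] .
    moreover have "({x, z}, {x', w}) \<in> opp_rel E" using c unfolding opp_rel_def by blast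
    ultimately show "W x z = W u v \<and> ({x, z}, {u, v}) \<in> (opp_rel E)\<^sup>*"
      using IH by (metis converse_rtrancl_into_rtrancl)
  qed
qed

lemma cross:
  "E u v \<Longrightarrow> E x z \<Longrightarrow> x \<in> W u v \<Longrightarrow> z \<in> W v u \<Longrightarrow>
     W x z = W u v \<and> ({x, z}, {u, v}) \<in> (opp_rel E)\<^sup>*"
  using cross_aux by blast


definition K where "K u v = {f. \<exists>x y. f = {x, y} \<and> E x y \<and> W x y = W u v}"

lemma K_W: "W u v = W u' v' \<Longrightarrow> K u v = K u' v'" unfolding K_def by simp
lemma K_mem: "E u v \<Longrightarrow> {u, v} \<in> K u v" unfolding K_def by blast

lemma K_sym_sub: "E u v \<Longrightarrow> K u v \<subseteq> K v u"
proof
  fix f assume e: "E u v" and f: "f \<in> K u v"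
  then obtain x y where xy: "f = {x, y}" "E x y" "W x y = W u v" unfolding K_def by blast
  have "W y x = W v u" using W_compl[OF xy(2)] W_compl[OF e] xy(3) by simp
  then have "{y, x} \<in> K v u" unfolding K_def using xy(2) E_sym by blast
  then show "f \<in> K v u" using xy(1) by (simp add: insert_commute)
qed
lemma K_sym: "E u v \<Longrightarrow> K u v = K v u"
  using K_sym_sub E_sym by blast

lemma K_edge: assumes e: "E u v" and st: "E s t"
  shows "{s, t} \<in> K u v \<longleftrightarrow> (s \<in> W u v \<longleftrightarrow> t \<notin> W u v)"
proof
  assume "{s, t} \<in> K u v"
  then obtain x y where xy: "{s, t} = {x, y}" "E x y" "W x y = W u v" unfolding K_def by blast
  have "x \<in> W u v" using W_self[OF xy(2)] xy(3) by simp
  moreover have "y \<notin> W u v" using W_self[OF E_sym[OF xy(2)]] W_disj xy(3) by blast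
  ultimately show "s \<in> W u v \<longleftrightarrow> t \<notin> W u v" using xy(1) by (auto simp: doubleton_eq_iff)
next
  assume a: "s \<in> W u v \<longleftrightarrow> t \<notin> W u v"
  have V: "s \<in> V" "t \<in> V" using E_V st by auto
  show "{s, t} \<in> K u v"
  proof (cases "s \<in> W u v")
    case True
    then have "t \<in> W v u" using a W_split[OF e V(2)] by blast
    then have "W s t = W u v" using cross[OF e st True] by blast
    then show ?thesis unfolding K_def using st by blast
  next
    case False
    then have "s \<in> W v u" "t \<in> W u v" using a W_split[OF e V(1)] by blast+
    then have "W t s = W u v" using cross[OF e E_sym[OF st]] by blast
    then have "{t, s} \<in> K u v" unfolding K_def using st E_sym by blast
    then show ?thesis by (simp add: insert_commute)
  qed
qed

lemma opp_sym: "(a, b) \<in> opp_rel E \<Longrightarrow> (b, a) \<in> opp_rel E"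
proof -
  assume "(a, b) \<in> opp_rel E"
  then obtain u v x y where "a = {u, v}" "b = {x, y}" "four_cycle E u v y x" unfolding opp_rel_def by blast
  moreover then have "four_cycle E x y v u" unfolding four_cycle_def using E_sym by blast
  ultimately show ?thesis unfolding opp_rel_def by blast
qed

lemma opp_rtrancl_sym: "(a, b) \<in> (opp_rel E)\<^sup>* \<Longrightarrow> (b, a) \<in> (opp_rel E)\<^sup>*"
proof -
  have "sym (opp_rel E)" using opp_sym unfolding sym_def by blast
  then have "sym ((opp_rel E)\<^sup>*)" by (rule sym_rtrancl)
  then show "(a, b) \<in> (opp_rel E)\<^sup>* \<Longrightarrow> (b, a) \<in> (opp_rel E)\<^sup>*" unfolding sym_def by blast
qed

lemma opp_step: "f \<in> K u v \<Longrightarrow> (f, g) \<in> opp_rel E \<Longrightarrow> g \<in> K u v"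
proof -
  assume f: "f \<in> K u v" and fg: "(f, g) \<in> opp_rel E"
  then obtain a b c e where abce: "f = {a, b}" "g = {c, e}" "four_cycle E a b e c" unfolding opp_rel_def by blast
  from f obtain x y where xy: "f = {x, y}" "E x y" "W x y = W u v" unfolding K_def by blast
  have c2: "four_cycle E b a c e" using abce(3) unfolding four_cycle_def using E_sym by blast
  have ce: "E c e" "E e c" using abce(3) E_sym unfolding four_cycle_def by blast+
  have "W a b = W u v \<or> W b a = W u v" using xy abce(1) by (auto simp: doubleton_eq_iff)
  then show "g \<in> K u v"
  proof
    assume "W a b = W u v"
    then have "W c e = W u v" using square_eq[OF abce(3)] by simp
    then show ?thesis unfolding K_def using abce(2) ce by blast
  next
    assume "W b a = W u v"
    then have "W e c = W u v" using square_eq[OF c2] by simp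
    then have "{e, c} \<in> K u v" unfolding K_def using ce by blast
    then show ?thesis using abce(2) by (simp add: insert_commute)
  qed
qed

lemma theta_img: assumes e: "E u v" shows "theta E `` {{u, v}} = K u v"
proof
  show "theta E `` {{u, v}} \<subseteq> K u v"
  proof
    fix g assume "g \<in> theta E `` {{u, v}}"
    then have "({u, v}, g) \<in> (opp_rel E)\<^sup>*" unfolding theta_def by auto
    then show "g \<in> K u v"
    proof (induction rule: rtrancl_induct)
      case base then show ?case using K_mem[OF e] .
    next
      case (step f g) then show ?case using opp_step by blast
    qed
  qed
next
  show "K u v \<subseteq> theta E `` {{u, v}}"
  proof
    fix f assume f: "f \<in> K u v"
    then obtain x y where xy: "f = {x, y}" "E x y" "W x y = W u v" unfolding K_def by blast
    have "x \<in> W u v" using W_self[OF xy(2)] xy(3) by simp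
    moreover have "y \<in> W v u" using W_self[OF E_sym[OF xy(2)]] W_compl[OF xy(2)] W_compl[OF e] xy(3) by simp
    ultimately have "({x, y}, {u, v}) \<in> (opp_rel E)\<^sup>*" using cross[OF e xy(2)] by blast
    then have "({u, v}, f) \<in> (opp_rel E)\<^sup>*" using opp_rtrancl_sym xy(1) by blast
    moreover have "f \<in> edges E" "{u, v} \<in> edges E" unfolding edges_def using xy e by blast+
    ultimately show "f \<in> theta E `` {{u, v}}" unfolding theta_def by blast
  qed
qed

lemma classes_iff: "F \<in> theta_classes E \<longleftrightarrow> (\<exists>u v. E u v \<and> F = K u v)"
proof
  assume "F \<in> theta_classes E"
  then obtain f where "f \<in> edges E" "F = theta E `` {f}" unfolding theta_classes_def quotient_def by blast
  then obtain u v where "f = {u, v}" "E u v" "F = theta E `` {f}" unfolding edges_def by blast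
  then show "\<exists>u v. E u v \<and> F = K u v" using theta_img by blast
next
  assume "\<exists>u v. E u v \<and> F = K u v"
  then obtain u v where "E u v" "F = K u v" by blast
  moreover then have "{u, v} \<in> edges E" unfolding edges_def by blast
  ultimately show "F \<in> theta_classes E" unfolding theta_classes_def quotient_def using theta_img by blast
qed

lemma reach_sub: assumes e: "E u v" and p: "p \<in> W u v" and r: "(del_class E (K u v))\<^sup>*\<^sup>* p q"
  shows "q \<in> W u v"
  using r
proof (induction rule: rtranclp_induct)
  case base then show ?case using p .
next
  case (step q q')
  then have "E q q'" "{q, q'} \<notin> K u v" unfolding del_class_def by auto
  then show ?case using K_edge[OF e] step.IH by blast
qed

lemma reach_sup_aux: assumes e: "E u v" and q: "q \<in> W u v"
  shows "\<forall>p. d p q = n \<longrightarrow> p \<in> W u v \<longrightarrow> (del_class E (K u v))\<^sup>*\<^sup>* p q"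
proof (induction n)
  case 0 then show ?case using d_zero q W_V by blast
next
  case (Suc n)
  show ?case
  proof (intro allI impI)
    fix p assume a: "d p q = Suc n" "p \<in> W u v"
    have V: "p \<in> V" "q \<in> V" using a q W_V by auto
    have "p \<noteq> q" using a by auto
    then obtain p' where p': "E p p'" "d p' q + 1 = d p q" using d_step V by blast
    have p'V: "p' \<in> V" using E_V p' by auto
    have "p' \<in> W u v"
    proof (rule ccontr)
      assume "p' \<notin> W u v"
      then have "p' \<in> W v u" using W_split[OF e p'V] by blast
      then have "W p p' = W u v" using cross[OF e p'(1) a(2)] by blast
      then have "d q p < d q p'" using q unfolding W_def by auto
      then show False using p' d_sym by (metis less_add_one not_less_iff_gr_or_eq)
    qed
    then have "del_class E (K u v) p p'" unfolding del_class_def using K_edge[OF e p'(1)] a(2) p' by blast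
    moreover have "(del_class E (K u v))\<^sup>*\<^sup>* p' q" using Suc.IH p' a(1) \<open>p' \<in> W u v\<close> by simp
    ultimately show "(del_class E (K u v))\<^sup>*\<^sup>* p q" by (rule converse_rtranclp_into_rtranclp)
  qed
qed

lemma reach: assumes e: "E u v" and p: "p \<in> W u v"
  shows "{q \<in> V. (del_class E (K u v))\<^sup>*\<^sup>* p q} = W u v"
  using reach_sub[OF e p] reach_sup_aux[OF e _ ] p W_V by blast

lemma halfspaces_K: assumes e: "E u v" shows "halfspaces V E (K u v) = {W u v, W v u}"
proof -
  have e': "E v u" using E_sym e .
  have "\<And>p. p \<in> V \<Longrightarrow> {q \<in> V. (del_class E (K u v))\<^sup>*\<^sup>* p q} \<in> {W u v, W v u}"
    using reach[OF e] reach[OF e'] K_sym[OF e] W_split[OF e] by (metis insertCI)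
  moreover have "W u v = {q \<in> V. (del_class E (K u v))\<^sup>*\<^sup>* u q}" using reach[OF e W_self[OF e]] by simp
  moreover have "W v u = {q \<in> V. (del_class E (K u v))\<^sup>*\<^sup>* v q}" using reach[OF e' W_self[OF e']] K_sym[OF e] by simp
  ultimately show ?thesis unfolding halfspaces_def using E_V e by blast
qed

lemma separates_K: assumes e: "E u v" and ab: "a \<in> V" "b \<in> V"
  shows "separates V E (K u v) a b \<longleftrightarrow> (a \<in> W u v \<longleftrightarrow> b \<notin> W u v)"
proof -
  have ne: "W u v \<noteq> W v u" using W_self[OF e] W_disj by blast
  show ?thesis unfolding separates_def halfspaces_K[OF e] using ne ab W_compl[OF e] by auto
qed


lemma W_nb: "E a b \<Longrightarrow> E q a \<Longrightarrow> q \<noteq> b \<Longrightarrow> q \<in> W a b"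
proof -
  assume e: "E a b" "E q a" "q \<noteq> b"
  have V: "q \<in> V" "a \<in> V" "b \<in> V" using E_V e by auto
  have "d q a = 1" using d_edge e by simp
  moreover have "d q b \<noteq> d q a" using bip[OF e(1) V(1)] by simp
  moreover have "d q b \<noteq> 0" using d_zero V e(3) by blast
  ultimately show ?thesis unfolding W_def using V by auto
qed

lemma W_convex_aux: assumes e: "E u v" and x: "x \<in> W u v" and y: "y \<in> W u v"
  shows "\<forall>z. d x z = n \<longrightarrow> z \<in> I x y \<longrightarrow> z \<in> W u v"
proof (induction n)
  case 0 then show ?case using d_zero x W_V I_def' by blast
next
  case (Suc n)
  show ?case
  proof (intro allI impI)
    fix z assume a: "d x z = Suc n" "z \<in> I x y"
    have V: "x \<in> V" "y \<in> V" "z \<in> V" using x y W_V a I_def' by auto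
    have "z \<noteq> x" using a by auto
    then obtain z' where z': "E z z'" "d z' x + 1 = d z x" using d_step V by blast
    have z'V: "z' \<in> V" using E_V z' by auto
    have xz': "d x z' = n" using z' a(1) d_sym by (metis add_right_cancel plus_1_eq_Suc add.commute)
    have "d z' y \<le> d z' z + d z y" using d_tri z'V V by blast
    then have "d z' y \<le> 1 + d z y" using d_edge[OF E_sym[OF z'(1)]] by simp
    moreover have "d x y \<le> d x z' + d z' y" using d_tri z'V V by blast
    moreover have "d x z + d z y = d x y" using a(2) I_def' by auto
    ultimately have eq: "d x z' + d z' y = d x y" and z'y: "d z' y = d z y + 1" using xz' a(1) by auto
    have "z' \<in> I x y" using eq z'V I_def' by auto
    then have z'W: "z' \<in> W u v" using Suc.IH xz' by blast
    show "z \<in> W u v"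
    proof (rule ccontr)
      assume "z \<notin> W u v"
      then have "z \<in> W v u" using W_split[OF e V(3)] by blast
      then have "W z' z = W u v" using cross[OF e E_sym[OF z'(1)] z'W] by blast
      then have "d y z' < d y z" using y unfolding W_def by auto
      then show False using z'y d_sym by (metis less_add_one not_less_iff_gr_or_eq)
    qed
  qed
qed

lemma W_convex: "E u v \<Longrightarrow> x \<in> W u v \<Longrightarrow> y \<in> W u v \<Longrightarrow> z \<in> I x y \<Longrightarrow> z \<in> W u v"
  using W_convex_aux by blast

definition convex where "convex C \<longleftrightarrow> (\<forall>x y z. x \<in> C \<longrightarrow> y \<in> C \<longrightarrow> z \<in> I x y \<longrightarrow> z \<in> C)"

lemma gated_convex: assumes C: "C \<subseteq> V" "C \<noteq> {}" "convex C" shows "gated V E C"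
  unfolding gated_def
proof
  fix v assume v: "v \<in> V"
  obtain c where "c \<in> C" using C by blast
  then obtain g where g: "g \<in> C" "\<forall>y. y \<in> C \<longrightarrow> d v g \<le> d v y"
    using ex_has_least_nat[of "\<lambda>x. x \<in> C" c "d v"] by blast
  show "\<exists>g\<in>C. \<forall>x\<in>C. g \<in> I v x"
  proof (intro bexI[OF _ g(1)] ballI)
    fix x assume x: "x \<in> C"
    have V: "g \<in> V" "x \<in> V" using g x C by auto
    obtain m where m: "m \<in> I v g" "m \<in> I g x" "m \<in> I x v" using med_ex[OF v V] by blast
    have mC: "m \<in> C" using C(3) g(1) x m(2) unfolding convex_def by blast
    have mV: "m \<in> V" using mC C by auto
    have "d v m + d m g = d v g" using m(1) I_def' by auto
    moreover have "d v g \<le> d v m" using g(2) mC by blast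
    ultimately have "d m g = 0" by simp
    then have "m = g" using d_zero mV V by blast
    then show "g \<in> I v x" using m(3) I_def' d_sym by (metis add.commute)
  qed
qed

lemma K_inter: assumes e: "E u v" "E u' v'" and f: "f \<in> K u v" "f \<in> K u' v'"
  shows "K u v = K u' v'"
proof -
  obtain x y where xy: "f = {x, y}" "E x y" "W x y = W u v" using f(1) unfolding K_def by blast
  obtain x' y' where xy': "f = {x', y'}" "E x' y'" "W x' y' = W u' v'" using f(2) unfolding K_def by blast
  have "(x' = x \<and> y' = y) \<or> (x' = y \<and> y' = x)" using xy(1) xy'(1) by (auto simp: doubleton_eq_iff)
  then show ?thesis
  proof
    assume "x' = x \<and> y' = y" then show ?thesis using xy xy' K_W by metis
  next
    assume "x' = y \<and> y' = x"
    then have "K u' v' = K y x" using xy' K_W by metis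
    also have "\<dots> = K x y" using K_sym[OF E_sym[OF xy(2)]] .
    also have "\<dots> = K u v" using K_W xy(3) by metis
    finally show ?thesis by simp
  qed
qed

lemma K_neq: assumes "E v0 a" "E v0 w" "a \<noteq> w" shows "K v0 a \<noteq> K v0 w"
proof
  assume eq: "K v0 a = K v0 w"
  have "{v0, a} \<in> K v0 w" using K_mem[OF assms(1)] eq by simp
  then have "v0 \<in> W v0 w \<longleftrightarrow> a \<notin> W v0 w" using K_edge[OF assms(2) assms(1)] by simp
  then have "a \<notin> W v0 w" using W_self[OF assms(2)] by simp
  moreover have "a \<in> W v0 w" using W_nb[OF assms(2) E_sym[OF assms(1)] assms(3)] .
  ultimately show False by simp
qed

lemma orth_square:
  assumes e: "E v0 a" "E v0 w" "a \<noteq> w" and o: "orthogonal E (K v0 a) (K v0 w)"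
  shows "\<exists>q. E a q \<and> E w q \<and> q \<noteq> v0"
proof -
  obtain u v y x where c: "four_cycle E u v y x" and
    m: "{u, v} \<in> K v0 a" "{x, y} \<in> K v0 a" "{u, x} \<in> K v0 w" "{v, y} \<in> K v0 w"
    using o unfolding orthogonal_def by blast
  have ce: "E u v" "E v y" "E y x" "E x u" using c unfolding four_cycle_def by auto
  have ce': "E u x" "E x y" "E v y" using ce E_sym by blast+
  have ea: "E a v0" "E w v0" using e E_sym by blast+
  have Ka: "K v0 a = K a v0" and Kw: "K v0 w = K w v0" using K_sym e by blast+
  have neq: "K v0 a \<noteq> K v0 w" using K_neq e by blast
  have n1: "{u, x} \<notin> K v0 a" using K_inter[OF e(1) e(2) _ m(3)] neq by blast
  have n2: "{v, y} \<notin> K v0 a" using K_inter[OF e(1) e(2) _ m(4)] neq by blast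
  have n3: "{u, v} \<notin> K v0 w" using K_inter[OF e(1) e(2) m(1)] neq by blast
  have n4: "{x, y} \<notin> K v0 w" using K_inter[OF e(1) e(2) m(2)] neq by blast
  note Ea = K_edge[OF ea(1), unfolded Ka[symmetric]]
  note Ew = K_edge[OF ea(2), unfolded Kw[symmetric]]
  have "u \<in> W a v0 \<longleftrightarrow> v \<notin> W a v0" using Ea[OF ce(1)] m(1) by simp
  moreover have "x \<in> W a v0 \<longleftrightarrow> y \<notin> W a v0" using Ea[OF ce'(2)] m(2) by simp
  moreover have "\<not> (u \<in> W a v0 \<longleftrightarrow> x \<notin> W a v0)" using Ea[OF ce'(1)] n1 by simp
  moreover have "u \<in> W w v0 \<longleftrightarrow> x \<notin> W w v0" using Ew[OF ce'(1)] m(3) by simp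
  moreover have "v \<in> W w v0 \<longleftrightarrow> y \<notin> W w v0" using Ew[OF ce'(3)] m(4) by simp
  moreover have "\<not> (u \<in> W w v0 \<longleftrightarrow> v \<notin> W w v0)" using Ew[OF ce(1)] n3 by simp
  ultimately have "\<exists>p. p \<in> W a v0 \<and> p \<in> W w v0" by blast
  then obtain p where p: "p \<in> W a v0" "p \<in> W w v0" by blast
  have V: "p \<in> V" "a \<in> V" "w \<in> V" "v0 \<in> V" using p W_V E_V e by auto
  have pa: "d p v0 = d p a + 1" using p(1) bip2[OF ea(1) V(1)] unfolding W_def by auto
  have pw: "d p v0 = d p w + 1" using p(2) bip2[OF ea(2) V(1)] unfolding W_def by auto
  have naw: "\<not> E a w" using bip[OF _ V(4)] d_edge e by metis
  have daw: "d a w = 2" using d_two[OF ea(1) e(2) e(3) naw] .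
  obtain m where m: "m \<in> I p a" "m \<in> I a w" "m \<in> I w p" using med_ex[OF V(1-3)] by blast
  have mV: "m \<in> V" using m I_def' by auto
  have s: "d a m + d m w = 2" using m(2) daw I_def' by auto
  have "d a m \<noteq> 0"
  proof
    assume "d a m = 0" then have "m = a" using d_zero V mV by metis
    then have "d w a + d a p = d w p" using m(3) I_def' by auto
    then show False using daw pa pw d_sym by (metis add_right_cancel add_cancel_right_right zero_neq_numeral add.commute)
  qed
  moreover have "d m w \<noteq> 0"
  proof
    assume "d m w = 0" then have "m = w" using d_zero V mV by metis
    then have "d p w + d w a = d p a" using m(1) I_def' by auto
    then show False using daw pa pw d_sym by (metis add_right_cancel add_cancel_right_right zero_neq_numeral)
  qed
  ultimately have "d a m = 1" "d m w = 1" using s by auto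
  then have "E a m" "E w m" using d_one V mV d_sym by metis+
  moreover have "m \<noteq> v0"
  proof
    assume "m = v0"
    then have "d p v0 + d v0 a = d p a" using m(1) I_def' by auto
    then show False using pa d_edge[OF e(1)] by simp
  qed
  ultimately show ?thesis by blast
qed

lemma class_at: assumes F: "F \<in> theta_classes E" "e \<in> F" "v0 \<in> e"
  shows "\<exists>w. E v0 w \<and> F = K v0 w"
proof -
  obtain u v where uv: "E u v" "F = K u v" using F classes_iff by blast
  then obtain x y where xy: "e = {x, y}" "E x y" "W x y = W u v" using F(2) unfolding K_def by blast
  have "F = K x y" using uv xy K_W by metis
  moreover have "K x y = K y x" using K_sym xy(2) by blast
  moreover have "v0 = x \<or> v0 = y" using F(3) xy(1) by auto
  ultimately show ?thesis using xy(2) E_sym[OF xy(2)] by metis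
qed

lemma sep_v0: assumes e: "E v0 w" and v: "v \<in> V"
  shows "separates V E (K v0 w) v0 v \<longleftrightarrow> v \<in> W w v0"
proof -
  have "v0 \<in> V" using E_V e by auto
  then have "separates V E (K v0 w) v0 v \<longleftrightarrow> v \<notin> W v0 w"
    using separates_K[OF e _ v] W_self[OF e] by simp
  also have "\<dots> \<longleftrightarrow> v \<in> W w v0" using W_compl[OF e] v by auto
  finally show ?thesis .
qed

lemma main:
  assumes v0: "v0 \<in> V" and L: "L \<noteq> {}" "POF E L" "\<forall>F\<in>L. \<exists>e\<in>F. v0 \<in> e"
  shows "{v \<in> V - {v0}. ladder_set V E v0 v = L} \<noteq> {} \<and>
         gated V E {v \<in> V - {v0}. ladder_set V E v0 v = L}"
proof -
  define S where "S = {v \<in> V - {v0}. ladder_set V E v0 v = L}"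
  define A where "A = {w. E v0 w \<and> K v0 w \<in> L}"
  have LC: "L \<subseteq> theta_classes E" using L(2) unfolding POF_def by auto
  have Lat: "\<And>F. F \<in> L \<Longrightarrow> \<exists>w. E v0 w \<and> F = K v0 w" using LC L(3) class_at by blast
  have Kcl: "\<And>w. E v0 w \<Longrightarrow> K v0 w \<in> theta_classes E" using classes_iff by blast
  have Ked: "\<And>w. E v0 w \<Longrightarrow> \<exists>e\<in>K v0 w. v0 \<in> e" using K_mem by blast
  have Schar: "\<And>v. v \<in> S \<longleftrightarrow> v \<in> V \<and> (\<forall>w. E v0 w \<longrightarrow> (v \<in> W w v0 \<longleftrightarrow> w \<in> A))"
  proof
    fix v assume vS: "v \<in> S"
    then have vV: "v \<in> V" and lad: "ladder_set V E v0 v = L" unfolding S_def by auto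
    have "\<forall>w. E v0 w \<longrightarrow> (v \<in> W w v0 \<longleftrightarrow> w \<in> A)"
    proof (intro allI impI)
      fix w assume e: "E v0 w"
      have "K v0 w \<in> ladder_set V E v0 v \<longleftrightarrow> v \<in> W w v0"
        unfolding ladder_set_def using Kcl[OF e] Ked[OF e] sep_v0[OF e vV] by auto
      then show "v \<in> W w v0 \<longleftrightarrow> w \<in> A" unfolding A_def lad using e by auto
    qed
    then show "v \<in> V \<and> (\<forall>w. E v0 w \<longrightarrow> (v \<in> W w v0 \<longleftrightarrow> w \<in> A))" using vV by blast
  next
    fix v assume a: "v \<in> V \<and> (\<forall>w. E v0 w \<longrightarrow> (v \<in> W w v0 \<longleftrightarrow> w \<in> A))"
    obtain F where "F \<in> L" using L(1) by blast
    then obtain w where w: "E v0 w" "F = K v0 w" using Lat by blast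
    then have "w \<in> A" unfolding A_def using \<open>F \<in> L\<close> by simp
    then have "v \<in> W w v0" using a w by blast
    then have "v \<noteq> v0" using W_disj W_self[OF w(1)] by blast
    moreover have "ladder_set V E v0 v = L"
    proof
      show "ladder_set V E v0 v \<subseteq> L"
      proof
        fix G assume "G \<in> ladder_set V E v0 v"
        then have G: "G \<in> theta_classes E" "separates V E G v0 v" "\<exists>e\<in>G. v0 \<in> e"
          unfolding ladder_set_def by auto
        then obtain w where w: "E v0 w" "G = K v0 w" using class_at by blast
        then have "v \<in> W w v0" using G(2) sep_v0 a by blast
        then have "w \<in> A" using a w by blast
        then show "G \<in> L" unfolding A_def using w by simp
      qed
    next
      show "L \<subseteq> ladder_set V E v0 v"
      proof
        fix G assume G: "G \<in> L"
        then obtain w where w: "E v0 w" "G = K v0 w" using Lat by blast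
        then have "w \<in> A" unfolding A_def using G by simp
        then have "v \<in> W w v0" using a w by blast
        then have "separates V E G v0 v" using sep_v0[OF w(1)] a w(2) by blast
        then show "G \<in> ladder_set V E v0 v" unfolding ladder_set_def using G LC L(3) by blast
      qed
    qed
    ultimately show "v \<in> S" unfolding S_def using a by blast
  qed
  have convexW: "\<And>u w. E u w \<Longrightarrow> convex (W u w)" unfolding convex_def using W_convex by blast
  have SV: "S \<subseteq> V" unfolding S_def by auto
  have Sconv: "convex S" unfolding convex_def
  proof (intro allI impI)
    fix x y z assume xyz: "x \<in> S" "y \<in> S" "z \<in> I x y"
    have zV: "z \<in> V" using xyz I_def' by auto
    have "\<forall>w. E v0 w \<longrightarrow> (z \<in> W w v0 \<longleftrightarrow> w \<in> A)"
    proof (intro allI impI)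
      fix w assume e: "E v0 w"
      show "z \<in> W w v0 \<longleftrightarrow> w \<in> A"
      proof (cases "w \<in> A")
        case True
        then have "x \<in> W w v0" "y \<in> W w v0" using xyz Schar e by blast+
        then show ?thesis using W_convex[OF E_sym[OF e]] xyz True by blast
      next
        case False
        then have "x \<notin> W w v0" "y \<notin> W w v0" using xyz Schar e by blast+
        then have "x \<in> W v0 w" "y \<in> W v0 w" using W_compl[OF e] xyz SV by auto
        then have "z \<in> W v0 w" using W_convex[OF e] xyz by blast
        then show ?thesis using W_disj False by blast
      qed
    qed
    then show "z \<in> S" using Schar zV by blast
  qed
  have finA: "finite A" using fin E_V unfolding A_def by (metis (no_types, lifting) finite_subset mem_Collect_eq subsetI)
  have "\<forall>A'. A' \<subseteq> A \<longrightarrow> (\<exists>c\<in>V. \<forall>w. E v0 w \<longrightarrow> (c \<in> W w v0 \<longleftrightarrow> w \<in> A'))"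
  proof -
    have "finite A' \<Longrightarrow> A' \<subseteq> A \<Longrightarrow> (\<exists>c\<in>V. \<forall>w. E v0 w \<longrightarrow> (c \<in> W w v0 \<longleftrightarrow> w \<in> A'))" for A'
    proof (induction A' rule: finite_induct)
      case empty
      show ?case using v0 W_disj W_self by blast
    next
      case (insert a A')
      then obtain c where c: "c \<in> V" "\<forall>w. E v0 w \<longrightarrow> (c \<in> W w v0 \<longleftrightarrow> w \<in> A')" by blast
      have aA: "a \<in> A" using insert by blast
      then have ea: "E v0 a" "K v0 a \<in> L" unfolding A_def by auto
      have "gated V E (W a v0)"
        using gated_convex[OF W_V _ convexW[OF E_sym[OF ea(1)]]] W_self[OF E_sym[OF ea(1)]] by blast
      then obtain g where g: "g \<in> W a v0" "\<forall>x\<in>W a v0. g \<in> I c x" unfolding gated_def using c(1) by blast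
      have "\<forall>w. E v0 w \<longrightarrow> (g \<in> W w v0 \<longleftrightarrow> w \<in> insert a A')"
      proof (intro allI impI)
        fix w assume ew: "E v0 w"
        show "g \<in> W w v0 \<longleftrightarrow> w \<in> insert a A'"
        proof (cases "w = a")
          case True then show ?thesis using g by simp
        next
          case False
          show ?thesis
          proof (cases "w \<in> A'")
            case True
            then have wA: "K v0 w \<in> L" using insert unfolding A_def by blast
            have "K v0 a \<noteq> K v0 w" using K_neq ea(1) ew False by metis
            then have "orthogonal E (K v0 a) (K v0 w)" using L(2) ea(2) wA unfolding POF_def by blast
            then obtain q where q: "E a q" "E w q" "q \<noteq> v0" using orth_square ea(1) ew False by metis
            have "q \<in> W a v0" using W_nb[OF E_sym[OF ea(1)] E_sym[OF q(1)] q(3)] .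
            then have "g \<in> I c q" using g by blast
            moreover have "q \<in> W w v0" using W_nb[OF E_sym[OF ew] E_sym[OF q(2)] q(3)] .
            moreover have "c \<in> W w v0" using c True ew by blast
            ultimately have "g \<in> W w v0" using W_convex[OF E_sym[OF ew]] by blast
            then show ?thesis using True by simp
          next
            case False2: False
            have "g \<in> I c a" using g W_self[OF E_sym[OF ea(1)]] by blast
            moreover have "a \<in> W v0 w" using W_nb[OF ew E_sym[OF ea(1)]] False by blast
            moreover have "c \<in> W v0 w" using c False2 ew W_compl[OF ew] by auto
            ultimately have "g \<in> W v0 w" using W_convex[OF ew] by blast
            then show ?thesis using W_disj False False2 by blast
          qed
        qed
      qed
      then show ?case using g W_V by blast
    qed
    then show ?thesis using finA finite_subset by blast
  qed
  then obtain c where "c \<in> V" "\<forall>w. E v0 w \<longrightarrow> (c \<in> W w v0 \<longleftrightarrow> w \<in> A)" by blast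
  then have "c \<in> S" using Schar by blast
  then have "S \<noteq> {}" by blast
  moreover have "gated V E S" using gated_convex[OF SV _ Sconv] \<open>S \<noteq> {}\<close> by blast
  ultimately show ?thesis unfolding S_def by blast
qed

end

theorem mainTheorem11:
  fixes V :: "'a set" and E :: "'a \<Rightarrow> 'a \<Rightarrow> bool" and v0 :: 'a and L :: "'a set set set"
  assumes "in_U3 V E"
    and "card V \<ge> 3"
    and "v0 \<in> V"
    and "\<forall>F\<in>theta_classes E. \<forall>H. majority_halfspace V E F H \<longrightarrow> v0 \<in> H"
    and "L \<noteq> {}"
    and "POF E L"
    and "\<forall>F\<in>L. \<exists>e\<in>F. v0 \<in> e"
  shows "{v \<in> V - {v0}. ladder_set V E v0 v = L} \<noteq> {} \<and>
         gated V E {v \<in> V - {v0}. ladder_set V E v0 v = L}"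
proof -
  interpret medg V E using assms(1) unfolding in_U3_def by unfold_locales blast
  show ?thesis using main assms(3,5,6,7) by blast
qed

end
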